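(* Let $r\ge1$, let $a_1,\dots,a_r\ge 2$ and $a,b$ be positive integers, and let $H_1,\dots,H_r$ be graphs. If $\max\{a_1,\dots,a_r\}\le a$ and $\max\{cl(H_1),\dots,cl(H_r)\}\le b$, then $$F_v(K_{a_1}[H_1],\dots,K_{a_r}[H_r];ab+1)\le F_v(a_1,\dots,a_r;a+1)\,F_v(H_1,\dots,H_r;b+1).$$
   Context: All graphs are finite and simple. "A graph $F$ contains $H$" means $F$ has a (not necessarily induced) subgraph isomorphic to $H$. An integer $a$ used in place of a graph denotes $K_a$. $cl(H)$ is the clique number of $H$. $G\rightarrow(H_1,\dots,H_r)^v$ means: for every partition $V(G)=X_1\cup\dots\cup X_r$ there is $i$ such that the subgraph induced by $X_i$ contains $H_i$. $\mathcal{F}_v(H_1,\dots,H_r;k)$ is the set of $K_k$-free graphs $G$ with $G\rightarrow(H_1,\dots,H_r)^v$, and the vertex Folkman number $F_v(H_1,\dots,H_r;k)$ is the minimum number of vertices of a graph in this set (these numbers are finite when $k>\max_i cl(H_i)$). The lexicographic product $G[H]$ has vertex set $V(G)\times V(H)$, with $\{(u_1,v_1),(u_2,v_2)\}$ an edge iff $\{u_1,u_2\}\in E(G)$, or $u_1=u_2$ and $\{v_1,v_2\}\in E(H)$. *)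

theory Defs
  imports Main "HOL-Library.Extended_Nat"
begin

text \<open>A graph is a pair (vertex set, edge relation); edges are stored as ordered
  pairs, in both directions.\<close>
type_synonym 'a sgraph = "'a set \<times> ('a \<times> 'a) set"

definition verts :: "'a sgraph \<Rightarrow> 'a set" where "verts G = fst G"
definition edges :: "'a sgraph \<Rightarrow> ('a \<times> 'a) set" where "edges G = snd G"

definition wf_graph :: "'a sgraph \<Rightarrow> bool" where
  "wf_graph G \<longleftrightarrow> finite (verts G) \<and> edges G \<subseteq> verts G \<times> verts G
     \<and> (\<forall>u v. (u, v) \<in> edges G \<longrightarrow> (v, u) \<in> edges G)
     \<and> (\<forall>u. (u, u) \<notin> edges G)"

definition contains :: "'a sgraph \<Rightarrow> 'b sgraph \<Rightarrow> bool" where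
  "contains F H \<longleftrightarrow> (\<exists>f. inj_on f (verts H) \<and> f ` verts H \<subseteq> verts F
     \<and> (\<forall>u v. (u, v) \<in> edges H \<longrightarrow> (f u, f v) \<in> edges F))"

definition complete :: "nat \<Rightarrow> nat sgraph" where
  "complete n = ({0..<n}, {(i, j). i < n \<and> j < n \<and> i \<noteq> j})"

definition cl :: "'a sgraph \<Rightarrow> nat" where
  "cl H = Max {k. contains H (complete k)}"

definition clique_free :: "nat \<Rightarrow> 'a sgraph \<Rightarrow> bool" where
  "clique_free k G \<longleftrightarrow> \<not> contains G (complete k)"

definition induced :: "'a sgraph \<Rightarrow> 'a set \<Rightarrow> 'a sgraph" where
  "induced G X = (verts G \<inter> X, edges G \<inter> (X \<times> X))"

definition lex :: "'a sgraph \<Rightarrow> 'b sgraph \<Rightarrow> ('a \<times> 'b) sgraph" where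
  "lex G H = (verts G \<times> verts H,
     {((u1, v1), (u2, v2)). u1 \<in> verts G \<and> u2 \<in> verts G \<and> v1 \<in> verts H \<and> v2 \<in> verts H
        \<and> ((u1, u2) \<in> edges G \<or> (u1 = u2 \<and> (v1, v2) \<in> edges H))})"

text \<open>G \<rightarrow> (H_0, ..., H_{r-1})^v: every partition of V(G) into r (possibly empty)
  classes, given as a colouring c with values < r, has a class i whose induced
  subgraph contains H_i.\<close>
definition varrows :: "'a sgraph \<Rightarrow> nat \<Rightarrow> (nat \<Rightarrow> 'b sgraph) \<Rightarrow> bool" where
  "varrows G r Hs \<longleftrightarrow> (\<forall>c. (\<forall>v\<in>verts G. c v < r) \<longrightarrow>
     (\<exists>i<r. contains (induced G {v \<in> verts G. c v = i}) (Hs i)))"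

text \<open>Vertex Folkman number F_v(H_0,...,H_{r-1}; k), as an extended natural
  (\<infinity> if no such graph exists). Every finite graph is isomorphic to one on
  natural-number vertices, so minimizing over nat-graphs is no restriction.\<close>
definition Fv :: "nat \<Rightarrow> (nat \<Rightarrow> 'b sgraph) \<Rightarrow> nat \<Rightarrow> enat" where
  "Fv r Hs k = (INF G \<in> {G :: nat sgraph. wf_graph G \<and> clique_free k G \<and> varrows G r Hs}.
       enat (card (verts G)))"

end

theory Submission
  imports Defs "HOL-Library.Nat_Bijection"
begin

lemma verts_simps[simp]:
  "verts (induced G X) = verts G \<inter> X" "edges (induced G X) = edges G \<inter> (X \<times> X)"
  "verts (lex G H) = verts G \<times> verts H"
  "verts (complete n) = {0..<n}" "edges (complete n) = {(i, j). i < n \<and> j < n \<and> i \<noteq> j}"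
  "verts (A, E) = A" "edges (A, E) = E"
  by (auto simp: verts_def edges_def induced_def lex_def complete_def)

lemma edges_lex:
  "((u1,v1),(u2,v2)) \<in> edges (lex G H) \<longleftrightarrow> u1 \<in> verts G \<and> u2 \<in> verts G \<and> v1 \<in> verts H \<and> v2 \<in> verts H
        \<and> ((u1, u2) \<in> edges G \<or> (u1 = u2 \<and> (v1, v2) \<in> edges H))"
  by (simp add: lex_def edges_def)

lemma contains_trans:
  assumes "contains F G" "contains G H" shows "contains F H"
proof -
  obtain f where f: "inj_on f (verts G)" "f ` verts G \<subseteq> verts F"
     "\<forall>u v. (u, v) \<in> edges G \<longrightarrow> (f u, f v) \<in> edges F" using assms(1) unfolding contains_def by blast
  obtain g where g: "inj_on g (verts H)" "g ` verts H \<subseteq> verts G"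
     "\<forall>u v. (u, v) \<in> edges H \<longrightarrow> (g u, g v) \<in> edges G" using assms(2) unfolding contains_def by blast
  show ?thesis unfolding contains_def
    apply (rule exI[of _ "f \<circ> g"])
    using f g by (auto simp: comp_inj_on inj_on_subset image_subset_iff)
qed

definition gmap :: "('a \<Rightarrow> 'c) \<Rightarrow> 'a sgraph \<Rightarrow> 'c sgraph" where
  "gmap f G = (f ` verts G, (\<lambda>(u,v). (f u, f v)) ` edges G)"

lemma gmap_contains:
  assumes "inj_on f (verts G)" "edges G \<subseteq> verts G \<times> verts G"
  shows "contains G (gmap f G)"
  unfolding contains_def
proof (rule exI[of _ "inv_into (verts G) f"], intro conjI allI impI)
  show "inj_on (inv_into (verts G) f) (verts (gmap f G))"
    by (simp add: gmap_def inj_on_inv_into)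
  show "inv_into (verts G) f ` verts (gmap f G) \<subseteq> verts G"
    by (auto simp: gmap_def inv_into_into)
  fix u v assume "(u, v) \<in> edges (gmap f G)"
  then obtain x y where "(x,y) \<in> edges G" "u = f x" "v = f y" by (auto simp: gmap_def)
  then show "(inv_into (verts G) f u, inv_into (verts G) f v) \<in> edges G"
    using assms by (auto simp: inv_into_f_f)
qed

lemma wf_gmap:
  assumes "inj_on f (verts G)" "wf_graph G"
  shows "wf_graph (gmap f G)"
  using assms unfolding wf_graph_def gmap_def
  by (auto simp: inj_on_def) (metis SigmaD1 SigmaD2 subsetD)+

lemma clique_free_gmap:
  assumes "inj_on f (verts G)" "wf_graph G" "clique_free k G"
  shows "clique_free k (gmap f G)"
  using assms gmap_contains[of f G] contains_trans unfolding clique_free_def wf_graph_def by blast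

lemma varrows_gmap:
  assumes "inj_on f (verts G)" "varrows G r Hs"
  shows "varrows (gmap f G) r Hs"
  unfolding varrows_def
proof (intro allI impI)
  fix c assume c: "\<forall>v\<in>verts (gmap f G). c v < r"
  then have "\<forall>v\<in>verts G. (c \<circ> f) v < r" by (simp add: gmap_def)
  then obtain i where i: "i < r" "contains (induced G {v \<in> verts G. (c \<circ> f) v = i}) (Hs i)"
    using assms(2) unfolding varrows_def by blast
  have "contains (induced (gmap f G) {v \<in> verts (gmap f G). c v = i}) (induced G {v \<in> verts G. (c \<circ> f) v = i})"
    unfolding contains_def
    apply (rule exI[of _ f])
    using assms(1) by (auto simp: gmap_def inj_on_subset)
  then show "\<exists>i<r. contains (induced (gmap f G) {v \<in> verts (gmap f G). c v = i}) (Hs i)"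
    using i contains_trans by blast
qed

lemma card_gmap: "inj_on f (verts G) \<Longrightarrow> card (verts (gmap f G)) = card (verts G)"
  by (simp add: gmap_def card_image)


definition isclique :: "'a sgraph \<Rightarrow> 'a set \<Rightarrow> bool" where
  "isclique G S \<longleftrightarrow> S \<subseteq> verts G \<and> finite S \<and> (\<forall>x\<in>S. \<forall>y\<in>S. x \<noteq> y \<longrightarrow> (x, y) \<in> edges G)"

lemma clique_contains:
  assumes "isclique G S" shows "contains G (complete (card S))"
proof -
  obtain h where h: "bij_betw h {0..<card S} S" using assms ex_bij_betw_nat_finite unfolding isclique_def by blast
  show ?thesis unfolding contains_def
    apply (rule exI[of _ h])
    using h assms unfolding isclique_def bij_betw_def inj_on_def
    by (auto simp: image_subset_iff) (metis atLeastLessThan_iff image_eqI zero_le)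
qed

lemma clique_bound:
  assumes "clique_free k G" "isclique G S" shows "card S < k"
proof (rule ccontr)
  assume "\<not> card S < k"
  then obtain T where T: "T \<subseteq> S" "card T = k" "finite T"
    using obtain_subset_with_card_n[of k S] by auto
  then have "isclique G T" using assms(2) unfolding isclique_def by blast
  then show False using clique_contains[of G T] T assms(1) unfolding clique_free_def by simp
qed

lemma contains_clique:
  assumes "contains G (complete k)" shows "\<exists>S. isclique G S \<and> card S = k"
proof -
  obtain f where f: "inj_on f {0..<k}" "f ` {0..<k} \<subseteq> verts G"
     "\<forall>u v. (u, v) \<in> edges (complete k) \<longrightarrow> (f u, f v) \<in> edges G" using assms unfolding contains_def by auto
  have "isclique G (f ` {0..<k})" unfolding isclique_def using f by (auto simp: inj_on_def) (metis less_nat_zero_code not_less_eq)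
  moreover have "card (f ` {0..<k}) = k" using f by (simp add: card_image)
  ultimately show ?thesis by blast
qed

lemma clique_free_lex:
  assumes G: "wf_graph G" and K: "wf_graph K"
    and cG: "clique_free (a+1) G" and cK: "clique_free (b+1) K"
  shows "clique_free (a*b+1) (lex G K)"
proof -
  { fix S assume S: "isclique (lex G K) S" "card S = a*b+1"
    define U where "U = fst ` S"
    define F where "F u = {v. (u,v) \<in> S}" for u
    have fS: "finite S" using S unfolding isclique_def by auto
    have "isclique G U"
      unfolding isclique_def U_def
    proof (intro conjI ballI impI)
      show "fst ` S \<subseteq> verts G" using S unfolding isclique_def by auto
      show "finite (fst ` S)" using fS by simp
      fix x y assume "x \<in> fst ` S" "y \<in> fst ` S" "x \<noteq> y"
      then obtain v w where "(x,v) \<in> S" "(y,w) \<in> S" by force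
      then have "((x,v),(y,w)) \<in> edges (lex G K)" using S \<open>x\<noteq>y\<close> unfolding isclique_def by auto
      then show "(x,y) \<in> edges G" using \<open>x\<noteq>y\<close> by (simp add: edges_lex)
    qed
    then have cU: "card U \<le> a" using clique_bound[OF cG] by fastforce
    have cF: "card (F u) \<le> b" for u
    proof -
      have "isclique K (F u)"
        unfolding isclique_def F_def
      proof (intro conjI ballI impI)
        show "{v. (u, v) \<in> S} \<subseteq> verts K" using S unfolding isclique_def by auto
        have "{v. (u, v) \<in> S} \<subseteq> snd ` S" by force
        then show "finite {v. (u, v) \<in> S}" using fS finite_subset by blast
        fix x y assume "x \<in> {v. (u, v) \<in> S}" "y \<in> {v. (u, v) \<in> S}" "x \<noteq> y"
        then have "((u,x),(u,y)) \<in> edges (lex G K)" using S unfolding isclique_def by auto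
        moreover have "(u,u) \<notin> edges G" using G unfolding wf_graph_def by auto
        ultimately show "(x,y) \<in> edges K" by (simp add: edges_lex)
      qed
      then show ?thesis using clique_bound[OF cK] by fastforce
    qed
    have "S = Sigma U F" unfolding U_def F_def by force
    then have "card S = (\<Sum>u\<in>U. card (F u))"
    proof -
      have "\<forall>u\<in>U. finite (F u)" using fS unfolding F_def
        by (metis (no_types, lifting) Collect_mem_eq SigmaI \<open>S = Sigma U F\<close> finite_subset mem_Collect_eq subsetI finite_imageI snd_conv image_eqI)
      moreover have "finite U" using fS U_def by simp
      ultimately show ?thesis using \<open>S = Sigma U F\<close> by simp
    qed
    also have "\<dots> \<le> card U * b" using cF sum_bounded_above[of U "\<lambda>u. card (F u)" b] by simp
    also have "\<dots> \<le> a * b" using cU by simp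
    finally have False using S by simp }
  then show ?thesis unfolding clique_free_def using contains_clique by blast
qed


lemma wf_lex:
  assumes "wf_graph G" "wf_graph K" shows "wf_graph (lex G K)"
  using assms unfolding wf_graph_def
  by (auto simp: lex_def edges_def verts_def)

lemma varrows_lex:
  fixes G :: "'a sgraph" and K :: "'c sgraph" and Hs :: "nat \<Rightarrow> 'b sgraph"
  assumes vG: "varrows G r (\<lambda>i. complete (as i))" and vK: "varrows K r Hs"
  shows "varrows (lex G K) r (\<lambda>i. lex (complete (as i)) (Hs i))"
  unfolding varrows_def
proof (intro allI impI)
  fix c assume c: "\<forall>w\<in>verts (lex G K). c w < r"
  have "\<forall>u\<in>verts G. \<exists>i. i < r \<and> contains (induced K {v\<in>verts K. c (u,v) = i}) (Hs i)"
  proof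
    fix u assume u: "u \<in> verts G"
    have "\<forall>v\<in>verts K. (\<lambda>v. c (u,v)) v < r" using c u by simp
    then have "\<exists>i<r. contains (induced K {v\<in>verts K. (\<lambda>v. c (u,v)) v = i}) (Hs i)"
      using vK[unfolded varrows_def, THEN spec, of "\<lambda>v. c (u,v)"] by blast
    then show "\<exists>i. i < r \<and> contains (induced K {v\<in>verts K. c (u,v) = i}) (Hs i)"
      by simp
  qed
  from bchoice[OF this] obtain col where col: "\<forall>u\<in>verts G. col u < r \<and> contains (induced K {v\<in>verts K. c (u,v) = col u}) (Hs (col u))"
    by blast
  have "\<forall>u\<in>verts G. col u < r" using col by blast
  then have "\<exists>j<r. contains (induced G {u\<in>verts G. col u = j}) (complete (as j))"
    using vG[unfolded varrows_def, THEN spec, of col] by blast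
  then obtain j where j: "j < r" "contains (induced G {u\<in>verts G. col u = j}) (complete (as j))"
    by blast
  then obtain g where g: "inj_on g {0..<as j}" "g ` {0..<as j} \<subseteq> verts G \<inter> {u\<in>verts G. col u = j}"
     "\<forall>p1 p2. (p1,p2) \<in> edges (complete (as j)) \<longrightarrow> (g p1, g p2) \<in> edges G"
    unfolding contains_def by auto
  have "\<forall>p\<in>{0..<as j}. \<exists>f. inj_on f (verts (Hs j)) \<and> f ` verts (Hs j) \<subseteq> {v\<in>verts K. c (g p,v) = j}
      \<and> (\<forall>h1 h2. (h1,h2) \<in> edges (Hs j) \<longrightarrow> (f h1, f h2) \<in> edges K)"
  proof
    fix p assume p: "p \<in> {0..<as j}"
    then have "g p \<in> verts G" "col (g p) = j" using g(2) by (auto simp: image_subset_iff)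
    then have "contains (induced K {v\<in>verts K. c (g p,v) = j}) (Hs j)" using col[rule_format, of "g p"] by simp
    then show "\<exists>f. inj_on f (verts (Hs j)) \<and> f ` verts (Hs j) \<subseteq> {v\<in>verts K. c (g p,v) = j}
      \<and> (\<forall>h1 h2. (h1,h2) \<in> edges (Hs j) \<longrightarrow> (f h1, f h2) \<in> edges K)"
      unfolding contains_def by auto
  qed
  from bchoice[OF this] obtain F where F: "\<forall>p\<in>{0..<as j}. inj_on (F p) (verts (Hs j)) \<and> F p ` verts (Hs j) \<subseteq> {v\<in>verts K. c (g p,v) = j}
      \<and> (\<forall>h1 h2. (h1,h2) \<in> edges (Hs j) \<longrightarrow> (F p h1, F p h2) \<in> edges K)"
    by blast
  have Finj: "inj_on (F p) (verts (Hs j))" and Fimg: "\<And>h. h \<in> verts (Hs j) \<Longrightarrow> F p h \<in> verts K \<and> c (g p, F p h) = j"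
    and Fedge: "\<And>h1 h2. (h1,h2) \<in> edges (Hs j) \<Longrightarrow> (F p h1, F p h2) \<in> edges K" if "p < as j" for p
    using F that by (simp_all add: image_subset_iff)
  have gimg: "g p \<in> verts G" if "p < as j" for p using g(2) that by (auto simp: image_subset_iff)
  have gedge: "(g p1, g p2) \<in> edges G" if "p1 < as j" "p2 < as j" "p1 \<noteq> p2" for p1 p2
    using g(3) that by simp
  define \<phi> where "\<phi> = (\<lambda>(p,h). (g p, F p h))"
  have "contains (induced (lex G K) {w\<in>verts (lex G K). c w = j}) (lex (complete (as j)) (Hs j))"
    unfolding contains_def
  proof (rule exI[of _ \<phi>], intro conjI allI impI)
    show "inj_on \<phi> (verts (lex (complete (as j)) (Hs j)))"
    proof (rule inj_onI)
      fix x y assume x: "x \<in> verts (lex (complete (as j)) (Hs j))" and y: "y \<in> verts (lex (complete (as j)) (Hs j))"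
        and e: "\<phi> x = \<phi> y"
      obtain p1 h1 p2 h2 where xy: "x = (p1,h1)" "y = (p2,h2)" by force
      have m: "p1 < as j" "p2 < as j" "h1 \<in> verts (Hs j)" "h2 \<in> verts (Hs j)" using x y xy by auto
      have e2: "g p1 = g p2" "F p1 h1 = F p2 h2" using e unfolding \<phi>_def xy by auto
      have "p1 = p2" using e2(1) m g(1) unfolding inj_on_def by simp
      moreover have "h1 = h2" using e2(2) m Finj[of p1] unfolding \<open>p1 = p2\<close>[symmetric] inj_on_def by blast
      ultimately show "x = y" using xy by simp
    qed
    show "\<phi> ` verts (lex (complete (as j)) (Hs j)) \<subseteq> verts (induced (lex G K) {w\<in>verts (lex G K). c w = j})"
      using gimg Fimg unfolding \<phi>_def by (auto simp: image_subset_iff)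
    fix x y assume xy: "(x,y) \<in> edges (lex (complete (as j)) (Hs j))"
    obtain p1 h1 p2 h2 where xy': "x = (p1,h1)" "y = (p2,h2)" by force
    have m: "p1 < as j" "p2 < as j" "h1 \<in> verts (Hs j)" "h2 \<in> verts (Hs j)"
      and d: "p1 \<noteq> p2 \<or> (p1 = p2 \<and> (h1,h2) \<in> edges (Hs j))"
      using xy unfolding xy' edges_lex by auto
    have m2: "g p1 \<in> verts G" "g p2 \<in> verts G" "F p1 h1 \<in> verts K" "F p2 h2 \<in> verts K"
      "c (g p1, F p1 h1) = j" "c (g p2, F p2 h2) = j"
      using m gimg Fimg by auto
    have "(g p1, g p2) \<in> edges G \<or> (g p1 = g p2 \<and> (F p1 h1, F p2 h2) \<in> edges K)"
      using d gedge[OF m(1,2)] Fedge[OF m(1)] by auto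
    then have "((g p1, F p1 h1), (g p2, F p2 h2)) \<in> edges (lex G K)"
      using m2 unfolding edges_lex by blast
    then show "(\<phi> x, \<phi> y) \<in> edges (induced (lex G K) {w\<in>verts (lex G K). c w = j})"
      using m2 unfolding \<phi>_def xy' by auto
  qed
  then show "\<exists>i<r. contains (induced (lex G K) {w\<in>verts (lex G K). c w = i}) (lex (complete (as i)) (Hs i))"
    using j(1) by blast
qed


lemma Fv_le:
  fixes L :: "nat sgraph"
  assumes "wf_graph L" "clique_free k L" "varrows L r Hs"
  shows "Fv r Hs k \<le> enat (card (verts L))"
  unfolding Fv_def using assms by (intro INF_lower) simp

lemma Fv_attained:
  assumes "Fv r Hs k \<noteq> \<infinity>"
  shows "\<exists>G::nat sgraph. wf_graph G \<and> clique_free k G \<and> varrows G r Hs \<and> Fv r Hs k = enat (card (verts G))"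
proof -
  let ?S = "{G :: nat sgraph. wf_graph G \<and> clique_free k G \<and> varrows G r Hs}"
  let ?A = "(\<lambda>G. enat (card (verts G))) ` ?S"
  have eq: "Fv r Hs k = Inf ?A" unfolding Fv_def by simp
  have ne: "?A \<noteq> {}"
  proof
    assume "?A = {}"
    with eq have "Fv r Hs k = Inf {}" by simp
    then show False using assms by (simp add: Inf_enat_def)
  qed
  from eq ne have "Fv r Hs k \<in> ?A" unfolding Inf_enat_def by (auto intro: LeastI)
  then show ?thesis by blast
qed

lemma key:
  fixes G K :: "nat sgraph"
  assumes "wf_graph G" "clique_free (a+1) G" "varrows G r (\<lambda>i. complete (as i))"
    "wf_graph K" "clique_free (b+1) K" "varrows K r Hs"
  shows "Fv r (\<lambda>i. lex (complete (as i)) (Hs i)) (a * b + 1) \<le> enat (card (verts G) * card (verts K))"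
proof -
  let ?L = "gmap prod_encode (lex G K)"
  have inj: "inj_on prod_encode (verts (lex G K))" by (rule inj_prod_encode)
  have w: "wf_graph (lex G K)" using wf_lex assms by blast
  have "Fv r (\<lambda>i. lex (complete (as i)) (Hs i)) (a * b + 1) \<le> enat (card (verts ?L))"
    apply (rule Fv_le)
    using wf_gmap[OF inj w] clique_free_gmap[OF inj w clique_free_lex[OF assms(1,4,2,5)]]
      varrows_gmap[OF inj varrows_lex[OF assms(3,6)]] by auto
  also have "card (verts ?L) = card (verts G) * card (verts K)"
    using card_gmap[OF inj] by (simp add: card_cartesian_product)
  finally show ?thesis .
qed

lemma empty_arrow:
  assumes "verts G = {}" "varrows G r Fs" "r \<ge> 1"
  shows "\<exists>i<r. verts (Fs i) = {} \<and> edges (Fs i) = {}"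
proof -
  have "\<forall>v\<in>verts G. (\<lambda>_. 0::nat) v < r" using assms by simp
  then have "\<exists>i<r. contains (induced G {v\<in>verts G. (\<lambda>_. 0::nat) v = i}) (Fs i)"
    using assms(2)[unfolded varrows_def, THEN spec, of "\<lambda>_. 0"] by blast
  then show ?thesis using assms(1) unfolding contains_def by fastforce
qed

lemma Fv_zero:
  assumes "i < r" "verts (Fs i) = {}" "edges (Fs i) = {}" "k \<ge> 1"
  shows "Fv r Fs k \<le> 0"
proof -
  have "Fv r Fs k \<le> enat (card (verts (({}, {}) :: nat sgraph)))"
  proof (rule Fv_le)
    show "wf_graph ({}, {} :: (nat \<times> nat) set)" by (simp add: wf_graph_def)
    show "clique_free k ({}, {} :: (nat \<times> nat) set)"
      using assms(4) unfolding clique_free_def contains_def by auto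
    show "varrows ({}, {} :: (nat \<times> nat) set) r Fs"
      unfolding varrows_def
    proof (intro allI impI)
      fix c :: "nat \<Rightarrow> nat"
      have "contains (induced ({}, {} :: (nat \<times> nat) set) {v \<in> verts ({}, {} :: (nat \<times> nat) set). c v = i}) (Fs i)"
        unfolding contains_def using assms(2,3) by simp
      then show "\<exists>i<r. contains (induced ({}, {} :: (nat \<times> nat) set) {v \<in> verts ({}, {} :: (nat \<times> nat) set). c v = i}) (Fs i)"
        using assms(1) by blast
    qed
  qed
  then show ?thesis by (simp add: zero_enat_def)
qed

theorem mainTheorem2:
  fixes r a b :: nat and as :: "nat \<Rightarrow> nat" and Hs :: "nat \<Rightarrow> 'b sgraph"
  assumes "r \<ge> 1"
    and "\<forall>i<r. as i \<ge> 2"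
    and "a > 0" and "b > 0"
    and "\<forall>i<r. wf_graph (Hs i)"
    and "\<forall>i<r. as i \<le> a"
    and "\<forall>i<r. cl (Hs i) \<le> b"
  shows "Fv r (\<lambda>i. lex (complete (as i)) (Hs i)) (a * b + 1)
         \<le> Fv r (\<lambda>i. complete (as i)) (a + 1) * Fv r Hs (b + 1)"
proof -
  let ?LHS = "Fv r (\<lambda>i. lex (complete (as i)) (Hs i)) (a * b + 1)"
  let ?X = "Fv r (\<lambda>i. complete (as i)) (a + 1)"
  let ?Y = "Fv r Hs (b + 1)"
  show ?thesis
  proof (cases "?X = 0 \<or> ?Y = 0")
    case True
    then have "\<exists>i<r. verts (lex (complete (as i)) (Hs i)) = {} \<and> edges (lex (complete (as i)) (Hs i)) = {}"
    proof
      assume X: "?X = 0"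
      then obtain G :: "nat sgraph" where G: "wf_graph G" "varrows G r (\<lambda>i. complete (as i))" "?X = enat (card (verts G))"
        using Fv_attained[of r "\<lambda>i. complete (as i)" "a+1"] by (auto simp: zero_enat_def)
      have "verts G = {}" using G X unfolding wf_graph_def by (simp add: zero_enat_def)
      then obtain i where "i < r" "verts (complete (as i)) = {}" using empty_arrow[OF _ G(2) assms(1)] by blast
      then show ?thesis by (auto simp: lex_def edges_def)
    next
      assume Y: "?Y = 0"
      then obtain K :: "nat sgraph" where K: "wf_graph K" "varrows K r Hs" "?Y = enat (card (verts K))"
        using Fv_attained[of r Hs "b+1"] by (auto simp: zero_enat_def)
      have "verts K = {}" using K Y unfolding wf_graph_def by (simp add: zero_enat_def)
      then obtain i where "i < r" "verts (Hs i) = {}" using empty_arrow[OF _ K(2) assms(1)] by blast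
      then show ?thesis by (auto simp: lex_def edges_def)
    qed
    then obtain i where "i < r" "verts (lex (complete (as i)) (Hs i)) = {}" "edges (lex (complete (as i)) (Hs i)) = {}"
      by blast
    then have "?LHS \<le> 0" using Fv_zero[of i r "\<lambda>i. lex (complete (as i)) (Hs i)" "a * b + 1"] by simp
    then show ?thesis by (rule order_trans[OF _ zero_le])
  next
    case False
    show ?thesis
    proof (cases "?X = \<infinity> \<or> ?Y = \<infinity>")
      case True
      then have "?X * ?Y = \<infinity>" using False True by (simp add: imult_is_infinity)
      then show ?thesis by simp
    next
      case inf: False
      have Xf: "?X \<noteq> \<infinity>" and Yf: "?Y \<noteq> \<infinity>" using inf by auto
      obtain G :: "nat sgraph" where G: "wf_graph G" "clique_free (a+1) G" "varrows G r (\<lambda>i. complete (as i))" "?X = enat (card (verts G))"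
        using Fv_attained[OF Xf] by blast
      obtain K :: "nat sgraph" where K: "wf_graph K" "clique_free (b+1) K" "varrows K r Hs" "?Y = enat (card (verts K))"
        using Fv_attained[OF Yf] by blast
      have "?LHS \<le> enat (card (verts G) * card (verts K))" using key[OF G(1-3) K(1-3)] .
      also have "\<dots> = ?X * ?Y" using G(4) K(4) by simp
      finally show ?thesis .
    qed
  qed
qed

end
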